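(* Let $A \in {\operatorname{\mathsf{TPD}}}_n(\mathbb{S}_{\max}^{\vee})$. The diagonal elements of $A$ are precisely the $\mathbb{S}_{\max}$-eigenvalues of $A$, counted with multiplicities.
   Context: Let $\Gamma$ be a divisible totally ordered abelian group, $\mathbb{T}_{\max}=\Gamma\cup\{\bot\}$ the tropical semifield (addition $\max$, multiplication $+$), and $\mathbb{S}_{\max}=\mathbb{S}_{\max}(\Gamma)$ the symmetrized tropical semiring, with zero element $\mathbf{0}$, unit element $\mathbf{1}$, minus operator $\ominus$, modulus $|\cdot|$ and balance operator $a^\circ=a\ominus a$. Every element of $\mathbb{S}_{\max}$ is positive ($c$, $c\in\Gamma$), negative ($\ominus c$), balanced ($c^\circ$) or $\mathbf{0}$; $\mathbb{S}_{\max}^\vee$ denotes the signed elements (positive, negative or $\mathbf{0}$), $\mathbb{S}_{\max}^\oplus$ the positive elements together with $\mathbf{0}$, $\mathbb{S}_{\max}^\circ$ the balanced elements. The balance relation is $a\,\nabla\, b$ iff $a\ominus b\in\mathbb{S}_{\max}^\circ$. We write $a<b$ iff $b\ominus a\in\mathbb{S}_{\max}^\oplus\setminus\{\mathbf{0}\}$. A symmetric matrix $A=(a_{ij})\in(\mathbb{S}_{\max}^\vee)^{n\times n}$ is tropical positive definite, $A\in{\operatorname{\mathsf{TPD}}}_n(\mathbb{S}_{\max}^\vee)$, if $\mathbf{0}<x^TAx$ for all $x\in(\mathbb{S}_{\max}^\vee)^n\setminus\{\mathbf{0}\}$ (equivalently $\mathbf{0}<a_{ii}$ for all $i$ and $a_{ij}^2<a_{ii}a_{jj}$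 for $i\neq j$). The determinant is $\det(A)=\bigoplus_{\pi}\mathrm{sgn}(\pi)\prod_i a_{i\pi(i)}$ with $\mathrm{sgn}(\pi)\in\{\mathbf{1},\ominus\mathbf{1}\}$. The characteristic polynomial is $P_A=\det(\mathsf{X} I\ominus A)$; an $\mathbb{S}_{\max}$-eigenvalue of $A$ is a $\gamma\in\mathbb{S}_{\max}^\vee$ with $\det(\gamma I\ominus A)\,\nabla\,\mathbf{0}$. When $P_A$ has coefficients in $\mathbb{S}_{\max}^\vee$ (which holds for ${\operatorname{\mathsf{TPD}}}$ matrices), the multiplicity of a root $r$ is defined recursively by $\mathrm{mult}_r(P)=0$ if $r$ is not a root, and otherwise $\mathrm{mult}_r(P)=1+\max\{\mathrm{mult}_r(Q): Q\text{ with coefficients in }\mathbb{S}_{\max}^\vee,\ P\,\nabla\,(\mathsf{X}\ominus r)Q\}$ (coefficientwise balance). *)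

theory Defs
  imports "HOL-Combinatorics.Permutations" "HOL-Computational_Algebra.Polynomial"
begin

text \<open>Gamma is a totally ordered abelian group (written additively); divisibility is
  an explicit hypothesis. Elements of S_max: zero, positive c, negative (minus c),
  balanced c-circ.\<close>

definition divisible_group :: "'g::linordered_ab_group_add itself \<Rightarrow> bool" where
  "divisible_group _ \<longleftrightarrow> (\<forall>x::'g. \<forall>m::nat. m > 0 \<longrightarrow> (\<exists>y. (\<Sum>_<m. y) = x))"

datatype 'g smax = SZero | Pos 'g | Neg 'g | Bal 'g

fun smod :: "'g smax \<Rightarrow> 'g" where
  "smod (Pos c) = c" | "smod (Neg c) = c" | "smod (Bal c) = c" | "smod SZero = undefined"

fun sminus :: "'g smax \<Rightarrow> 'g smax" where
  "sminus SZero = SZero" | "sminus (Pos c) = Neg c" | "sminus (Neg c) = Pos c"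
| "sminus (Bal c) = Bal c"

definition sadd :: "'g::linorder smax \<Rightarrow> 'g smax \<Rightarrow> 'g smax" where
  "sadd a b = (if a = SZero then b else if b = SZero then a
     else if smod a < smod b then b else if smod b < smod a then a
     else if a = b then a else Bal (smod a))"

fun smul :: "'g::ab_group_add smax \<Rightarrow> 'g smax \<Rightarrow> 'g smax" where
  "smul SZero b = SZero"
| "smul a SZero = SZero"
| "smul (Pos c) (Pos d) = Pos (c + d)"
| "smul (Pos c) (Neg d) = Neg (c + d)"
| "smul (Neg c) (Pos d) = Neg (c + d)"
| "smul (Neg c) (Neg d) = Pos (c + d)"
| "smul a b = Bal (smod a + smod b)"

instantiation smax :: (linordered_ab_group_add) comm_semiring_1
begin
definition "zero_smax = SZero"
definition "one_smax = Pos 0"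
definition "plus_smax = sadd"
definition "times_smax = smul"
instance
proof
  fix a b c :: "'a smax"
  show "a + b + c = a + (b + c)"
    by (cases a; cases b; cases c) (auto simp: plus_smax_def sadd_def)
  show "a + b = b + a"
    by (cases a; cases b) (auto simp: plus_smax_def sadd_def)
  show "0 + a = a" by (simp add: plus_smax_def sadd_def zero_smax_def)
  show "a * b * c = a * (b * c)"
    by (cases a; cases b; cases c) (auto simp: times_smax_def add.assoc)
  show "a * b = b * a"
    by (cases a; cases b) (auto simp: times_smax_def add.commute)
  show "1 * a = a" by (cases a) (auto simp: times_smax_def one_smax_def)
  show "0 * a = 0" by (simp add: times_smax_def zero_smax_def)
  show "a * 0 = 0" by (cases a) (simp_all add: times_smax_def zero_smax_def)
  show "(0::'a smax) \<noteq> 1" by (simp add: zero_smax_def one_smax_def)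
  show "(a + b) * c = a * c + b * c"
    by (cases a; cases b; cases c)
       (auto simp: times_smax_def plus_smax_def sadd_def add_strict_right_mono)
qed
end

definition signed :: "'g smax \<Rightarrow> bool" where
  "signed a \<longleftrightarrow> (\<forall>c. a \<noteq> Bal c)"

definition balanced :: "'g smax \<Rightarrow> bool" where
  "balanced a \<longleftrightarrow> a = SZero \<or> (\<exists>c. a = Bal c)"

definition bal_rel :: "'g::linordered_ab_group_add smax \<Rightarrow> 'g smax \<Rightarrow> bool" (infix "\<nabla>" 50) where
  "a \<nabla> b \<longleftrightarrow> balanced (a + sminus b)"

definition sless :: "'g::linordered_ab_group_add smax \<Rightarrow> 'g smax \<Rightarrow> bool" where
  "sless a b \<longleftrightarrow> (\<exists>c. b + sminus a = Pos c)"

text \<open>n x n matrices are functions nat => nat => _ restricted to indices below n.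
  Generic determinant over a commutative semiring, with a given minus operator
  used for the sign of odd permutations.\<close>

definition det_gen :: "('a::comm_semiring_1 \<Rightarrow> 'a) \<Rightarrow> (nat \<Rightarrow> nat \<Rightarrow> 'a) \<Rightarrow> nat \<Rightarrow> 'a" where
  "det_gen neg A n = (\<Sum>p\<in>{p. p permutes {..<n}}.
      (if evenperm p then 1 else neg 1) * (\<Prod>i<n. A i (p i)))"

definition sdet :: "(nat \<Rightarrow> nat \<Rightarrow> 'g::linordered_ab_group_add smax) \<Rightarrow> nat \<Rightarrow> 'g smax" where
  "sdet A n = det_gen sminus A n"

definition qform :: "(nat \<Rightarrow> nat \<Rightarrow> 'g::linordered_ab_group_add smax) \<Rightarrow> nat \<Rightarrow> (nat \<Rightarrow> 'g smax) \<Rightarrow> 'g smax" where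
  "qform A n x = (\<Sum>i<n. \<Sum>j<n. x i * A i j * x j)"

definition TPD :: "nat \<Rightarrow> (nat \<Rightarrow> nat \<Rightarrow> 'g::linordered_ab_group_add smax) set" where
  "TPD n = {A. (\<forall>i<n. \<forall>j<n. signed (A i j) \<and> A i j = A j i) \<and>
      (\<forall>x. (\<forall>i<n. signed (x i)) \<and> (\<exists>i<n. x i \<noteq> 0) \<longrightarrow> sless 0 (qform A n x))}"

definition s_eigenvalue :: "(nat \<Rightarrow> nat \<Rightarrow> 'g::linordered_ab_group_add smax) \<Rightarrow> nat \<Rightarrow> 'g smax \<Rightarrow> bool" where
  "s_eigenvalue A n \<gamma> \<longleftrightarrow> signed \<gamma> \<and>
     sdet (\<lambda>i j. (if i = j then \<gamma> else 0) + sminus (A i j)) n \<nabla> 0"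

definition pminus :: "'g::linordered_ab_group_add smax poly \<Rightarrow> 'g smax poly" where
  "pminus p = map_poly sminus p"

definition charpoly :: "(nat \<Rightarrow> nat \<Rightarrow> 'g::linordered_ab_group_add smax) \<Rightarrow> nat \<Rightarrow> 'g smax poly" where
  "charpoly A n = det_gen pminus (\<lambda>i j. (if i = j then [:0, 1:] else 0) + [:sminus (A i j):]) n"

definition signed_poly :: "'g::linordered_ab_group_add smax poly \<Rightarrow> bool" where
  "signed_poly P \<longleftrightarrow> (\<forall>k. signed (coeff P k))"

definition poly_bal :: "'g::linordered_ab_group_add smax poly \<Rightarrow> 'g smax poly \<Rightarrow> bool" where
  "poly_bal P Q \<longleftrightarrow> (\<forall>k. coeff P k \<nabla> coeff Q k)"

definition is_sroot :: "'g::linordered_ab_group_add smax poly \<Rightarrow> 'g smax \<Rightarrow> bool" where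
  "is_sroot P r \<longleftrightarrow> signed r \<and> poly P r \<nabla> 0"

text \<open>mult_ge P r k: the recursive multiplicity of r in P is at least k.
  mult_r(P) = 0 if r is not a root, otherwise 1 + max of mult_r(Q) over signed Q with
  P balancing (X minus r) Q (max of the empty set read as 0).\<close>
inductive mult_ge :: "'g::linordered_ab_group_add smax poly \<Rightarrow> 'g smax \<Rightarrow> nat \<Rightarrow> bool" where
  mult_ge_0: "mult_ge P r 0"
| mult_ge_1: "is_sroot P r \<Longrightarrow> mult_ge P r (Suc 0)"
| mult_ge_Suc: "is_sroot P r \<Longrightarrow> signed_poly Q \<Longrightarrow> poly_bal P ([:sminus r, 1:] * Q) \<Longrightarrow>
     mult_ge Q r k \<Longrightarrow> mult_ge P r (Suc k)"

definition root_mult :: "'g::linordered_ab_group_add smax poly \<Rightarrow> 'g smax \<Rightarrow> nat" where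
  "root_mult P r = (GREATEST k. mult_ge P r k)"

end

theory Submission
  imports Defs
begin


lemma sz: "(0::'g::linordered_ab_group_add smax) = SZero" by (simp add: zero_smax_def)
lemma so: "(1::'g::linordered_ab_group_add smax) = Pos 0" by (simp add: one_smax_def)

lemma sadd_simps[simp]:
  fixes a b :: "'g::linordered_ab_group_add"
  shows "SZero + x = x" "x + SZero = x"
  "Pos a + Pos b = (if a < b then Pos b else if b < a then Pos a else Pos a)"
  "Neg a + Neg b = (if a < b then Neg b else if b < a then Neg a else Neg a)"
  "Pos a + Neg b = (if a < b then Neg b else if b < a then Pos a else Bal a)"
  "Neg a + Pos b = (if a < b then Pos b else if b < a then Neg a else Bal a)"
  "Bal a + Pos b = (if a < b then Pos b else Bal a)"
  "Pos b + Bal a = (if a < b then Pos b else Bal a)"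
  "Bal a + Neg b = (if a < b then Neg b else Bal a)"
  "Neg b + Bal a = (if a < b then Neg b else Bal a)"
  "Bal a + Bal b = (if a < b then Bal b else Bal a)"
  by (auto simp: plus_smax_def sadd_def)

lemma smul_simps[simp]:
  fixes a b :: "'g::linordered_ab_group_add"
  shows "SZero * x = SZero" "x * SZero = SZero"
  "Pos a * Pos b = Pos (a+b)" "Pos a * Neg b = Neg (a+b)" "Neg a * Pos b = Neg (a+b)"
  "Neg a * Neg b = Pos (a+b)" "Bal a * y = (if y = SZero then SZero else Bal (a + smod y))"
  "y * Bal a = (if y = SZero then SZero else Bal (smod y + a))"
  subgoal by (simp add: times_smax_def)
  subgoal by (cases x; simp add: times_smax_def)
  subgoal by (simp add: times_smax_def)
  subgoal by (simp add: times_smax_def)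
  subgoal by (simp add: times_smax_def)
  subgoal by (simp add: times_smax_def)
  subgoal by (cases y; simp add: times_smax_def)
  subgoal by (cases y; simp add: times_smax_def)
  done

lemma smax_add_eq_0: "(x::'g::linordered_ab_group_add smax) + y = 0 \<longleftrightarrow> x = 0 \<and> y = 0"
  by (cases x; cases y; simp add: sz)

lemma smax_mult_eq_0: "(x::'g::linordered_ab_group_add smax) * y = 0 \<longleftrightarrow> x = 0 \<or> y = 0"
  by (cases x; cases y; simp add: sz)

lemma smax_mult_eq_SZero: "(x::'g::linordered_ab_group_add smax) * y = SZero \<longleftrightarrow> x = SZero \<or> y = SZero"
  by (cases x; cases y; simp)

lemma smax_add_eq_SZero: "(x::'g::linordered_ab_group_add smax) + y = SZero \<longleftrightarrow> x = SZero \<and> y = SZero"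
  by (cases x; cases y; simp)

lemma smod_add: "(x::'g::linordered_ab_group_add smax) \<noteq> 0 \<Longrightarrow> y \<noteq> 0 \<Longrightarrow> smod (x + y) = max (smod x) (smod y)"
  by (cases x; cases y; auto simp: sz max_def)

lemma smod_mult: "(x::'g::linordered_ab_group_add smax) \<noteq> 0 \<Longrightarrow> y \<noteq> 0 \<Longrightarrow> smod (x * y) = smod x + smod y"
  by (cases x; cases y; auto simp: sz)

lemma sminus_add: "sminus ((x::'g::linordered_ab_group_add smax) + y) = sminus x + sminus y"
  by (cases x; cases y; auto)

lemma sminus_mult1: "sminus ((x::'g::linordered_ab_group_add smax) * y) = sminus x * y"
  by (cases x; cases y; auto)

lemma sminus_mult2: "(x::'g::linordered_ab_group_add smax) * sminus y = sminus (x * y)"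
  by (cases x; cases y; auto)

lemma sminus_sminus[simp]: "sminus (sminus x) = x" by (cases x; auto)
lemma sminus_0[simp]: "sminus (0::'g::linordered_ab_group_add smax) = 0" by (simp add: sz)
lemma sminus_eq_0[simp]: "sminus (x::'g::linordered_ab_group_add smax) = 0 \<longleftrightarrow> x = 0" by (cases x; simp add: sz)
lemma sminus_eq_SZero[simp]: "sminus x = SZero \<longleftrightarrow> x = SZero" by (cases x; simp)
lemma smod_sminus[simp]: "smod (sminus x) = smod x" by (cases x; auto)

lemma signed_cases: "signed x \<longleftrightarrow> x = SZero \<or> (\<exists>c. x = Pos c) \<or> (\<exists>c. x = Neg c)"
  by (cases x; auto simp: signed_def)

lemma signed_mult: "signed (x::'g::linordered_ab_group_add smax) \<Longrightarrow> signed y \<Longrightarrow> signed (x*y)"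
  by (cases x; cases y; auto simp: signed_def)

lemma signed_sminus[simp]: "signed (sminus x) = signed x"
  by (cases x; auto simp: signed_def)

lemma balanced_mult: "balanced ((x::'g::linordered_ab_group_add smax) * y) \<longleftrightarrow> balanced x \<or> balanced y"
  by (cases x; cases y; auto simp: balanced_def)

lemma bal_refl: "(x::'g::linordered_ab_group_add smax) \<nabla> x"
  by (cases x; auto simp: bal_rel_def balanced_def)

lemma bal_signed_eq: "signed (x::'g::linordered_ab_group_add smax) \<Longrightarrow> signed y \<Longrightarrow> x \<nabla> y \<Longrightarrow> x = y"
  by (cases x; cases y; auto simp: bal_rel_def balanced_def signed_def split: if_splits)

lemma bal_mult: "(x::'g::linordered_ab_group_add smax) \<nabla> y \<Longrightarrow> x * z \<nabla> y * z"
  unfolding bal_rel_def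
  by (metis balanced_mult distrib_right sminus_mult1)

definition dle :: "'g::linordered_ab_group_add smax \<Rightarrow> 'g smax \<Rightarrow> bool" where
  "dle x y \<longleftrightarrow> x = 0 \<or> (y \<noteq> 0 \<and> smod x \<le> smod y)"

lemma bal_dle: "signed (x::'g::linordered_ab_group_add smax) \<Longrightarrow> x \<nabla> y \<Longrightarrow> dle x y"
  by (cases x; cases y; auto simp: bal_rel_def balanced_def signed_def dle_def sz split: if_splits)

lemma dle_add: "dle (x + y) (z::'g::linordered_ab_group_add smax) \<longleftrightarrow> dle x z \<and> dle y z"
  by (cases x; cases y; cases z; auto simp: dle_def sz)

lemma dom_add: "(y::'g::linordered_ab_group_add smax) = 0 \<or> (x \<noteq> 0 \<and> smod y < smod x) \<Longrightarrow> x + y = x"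
  by (cases x; cases y; auto simp: sz)

lemma smax_add_idem[simp]: "(x::'g::linordered_ab_group_add smax) + x = x"
  by (cases x; simp)

lemma dom_add2: "(y::'g::linordered_ab_group_add smax) = 0 \<or> (x \<noteq> 0 \<and> smod y < smod x) \<Longrightarrow> y + x = x"
  using dom_add by (metis add.commute)

lemma L1: "signed (x::'g::linordered_ab_group_add smax) \<Longrightarrow> x \<noteq> 0 \<Longrightarrow> signed y \<Longrightarrow> y \<noteq> x \<Longrightarrow> dle y x \<Longrightarrow> x + sminus y = x"
  by (cases x; cases y; auto simp: dle_def sz signed_def)

lemma L2: "signed (x::'g::linordered_ab_group_add smax) \<Longrightarrow> x \<noteq> 0 \<Longrightarrow> signed y \<Longrightarrow> y \<noteq> x \<Longrightarrow> dle y x \<Longrightarrow> y + sminus x = sminus x"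
  by (cases x; cases y; auto simp: dle_def sz signed_def)

lemma sminus_neq: "signed (x::'g::linordered_ab_group_add smax) \<Longrightarrow> x \<noteq> 0 \<Longrightarrow> sminus x \<noteq> x"
  by (cases x; auto simp: sz signed_def)


lemma dle_0[simp]: "dle 0 y" by (simp add: dle_def)

lemma dle_trans: "dle x y \<Longrightarrow> dle y (z::'g::linordered_ab_group_add smax) \<Longrightarrow> dle x z"
  unfolding dle_def by auto

lemma dle_sminus1[simp]: "dle (sminus x) (y::'g::linordered_ab_group_add smax) = dle x y"
  unfolding dle_def by auto
lemma dle_sminus2[simp]: "dle x (sminus (y::'g::linordered_ab_group_add smax)) = dle x y"
  unfolding dle_def by auto

lemma dle_mult_Pos: "dle x (y::'g::linordered_ab_group_add smax) \<Longrightarrow> dle (Pos c * x) (Pos c * y)"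
  unfolding dle_def by (auto simp: smax_mult_eq_0 smod_mult sz[symmetric])

definition chain :: "(nat \<Rightarrow> 'g::linordered_ab_group_add smax) \<Rightarrow> nat \<Rightarrow> bool" where
  "chain a m \<longleftrightarrow> (\<exists>f. (\<forall>j<m. f j < f (Suc j) \<and> a (f (Suc j)) = sminus (a (f j))) \<and>
      a (f 0) \<noteq> 0 \<and> (\<forall>k. dle (a k) (a (f 0))))"

lemma descartes:
  fixes a b :: "nat \<Rightarrow> 'g::linordered_ab_group_add smax"
  assumes sa: "\<forall>k. signed (a k)" and sb: "\<forall>k. signed (b k)" and fin: "\<forall>k>N. b k = 0"
    and bal: "\<forall>k. a k \<nabla> Pos c * ((if k = 0 then 0 else b (k-1)) + sminus (b k))"
    and ch: "chain b m"
  shows "chain a (Suc m)"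
proof -
  obtain f where f1: "\<forall>j<m. f j < f (Suc j) \<and> b (f (Suc j)) = sminus (b (f j))"
    and f2: "b (f 0) \<noteq> 0" and f3: "\<forall>k. dle (b k) (b (f 0))"
    using ch unfolding chain_def by blast
  define x0 where "x0 = b (f 0)"
  have act: "b (f j) \<noteq> 0 \<and> smod (b (f j)) = smod x0" if "j \<le> m" for j
    using that
  proof (induction j)
    case 0 then show ?case using f2 x0_def by simp
  next
    case (Suc j) then show ?case using f1 by auto
  qed
  have domj: "dle (b k) (b (f j))" if "j \<le> m" for j k
    using f3 act[OF that] unfolding x0_def dle_def by auto
  have rsig: "signed (Pos c * y)" if "signed y" for y
    using that by (intro signed_mult) (auto simp: signed_def)
  have up: "a (Suc l) = Pos c * b (f j)" if "b l = b (f j)" "b (Suc l) \<noteq> b (f j)" "j \<le> m" for l j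
  proof -
    have "b (f j) + sminus (b (Suc l)) = b (f j)"
      using that act[OF that(3)] domj[OF that(3)] sb by (intro L1) auto
    then have "b l + sminus (b (Suc l)) = b (f j)" using that(1) by simp
    then have "a (Suc l) \<nabla> Pos c * b (f j)" using bal[rule_format, of "Suc l"] by simp
    then show ?thesis using bal_signed_eq sa rsig sb by blast
  qed
  have down: "a l = Pos c * sminus (b (f 0))" if "b l = b (f 0)" "l = 0 \<or> b (l - 1) \<noteq> b (f 0)" for l
  proof -
    have "(if l = 0 then 0 else b (l-1)) + sminus (b l) = sminus (b (f 0))"
    proof (cases "l = 0")
      case True then show ?thesis using that by (simp add: sz)
    next
      case False then show ?thesis
        using that act[of 0] domj[of 0] sb by (auto intro: L2)
    qed
    then have "a l \<nabla> Pos c * sminus (b (f 0))" using bal[rule_format, of l] by simp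
    then show ?thesis using bal_signed_eq sa rsig sb signed_sminus by metis
  qed
  define l0 where "l0 = (LEAST l. b l = b (f 0))"
  have l0a: "b l0 = b (f 0)" unfolding l0_def by (rule LeastI) simp
  have l0b: "l0 \<le> f 0" unfolding l0_def by (rule Least_le) simp
  have l0c: "l0 = 0 \<or> b (l0 - 1) \<noteq> b (f 0)"
  proof (cases "l0 = 0")
    case False
    then have "l0 - 1 < l0" by simp
    then show ?thesis unfolding l0_def using not_less_Least by blast
  qed simp
  have bnd: "l \<le> N" if "b l = b (f j)" "j \<le> m" for l j
    using fin act[OF that(2)] that(1) by (metis not_le)
  define G where "G j = (GREATEST l. f j \<le> l \<and> (j < m \<longrightarrow> l < f (Suc j)) \<and> b l = b (f j))" for j
  have G: "f j \<le> G j \<and> (j < m \<longrightarrow> G j < f (Suc j)) \<and> b (G j) = b (f j) \<and> b (Suc (G j)) \<noteq> b (f j)"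
    if jm: "j \<le> m" for j
  proof -
    let ?P = "\<lambda>l. f j \<le> l \<and> (j < m \<longrightarrow> l < f (Suc j)) \<and> b l = b (f j)"
    have P0: "?P (f j)" using f1 by auto
    have Pb: "\<And>y. ?P y \<Longrightarrow> y \<le> N" using bnd jm by blast
    have PG: "?P (G j)" unfolding G_def by (rule GreatestI_nat[where P="?P", OF P0 Pb])
    have Gmax: "\<And>y. ?P y \<Longrightarrow> y \<le> G j" unfolding G_def by (rule Greatest_le_nat[where P="?P", OF _ Pb])
    have "b (Suc (G j)) \<noteq> b (f j)"
    proof
      assume eq: "b (Suc (G j)) = b (f j)"
      show False
      proof (cases "j < m")
        case True
        show False
        proof (cases "Suc (G j) < f (Suc j)")
          case True
          then have "?P (Suc (G j))" using PG eq by auto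
          then show False using Gmax by fastforce
        next
          case False
          then have "Suc (G j) = f (Suc j)" using PG \<open>j < m\<close> by auto
          then have "b (Suc (G j)) = sminus (b (f j))" using f1 \<open>j < m\<close> by auto
          then show False using eq sminus_neq[of "b (f j)"] sb act[OF jm] by auto
        qed
      next
        case False
        then have "?P (Suc (G j))" using PG eq by auto
        then show False using Gmax by fastforce
      qed
    qed
    then show ?thesis using PG by blast
  qed
  have aG: "a (Suc (G j)) = Pos c * b (f j)" if "j \<le> m" for j
    using up G[OF that] that by blast
  define g where "g j = (if j = 0 then l0 else Suc (G (j - 1)))" for j
  have s1: "g j < g (Suc j) \<and> a (g (Suc j)) = sminus (a (g j))" if "j < Suc m" for j
  proof (cases j)
    case 0
    have "g 0 < g (Suc 0)" using l0b G[of 0] by (simp add: g_def)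
    moreover have "a (g (Suc 0)) = sminus (a (g 0))"
      using aG[of 0] down[OF l0a l0c] by (simp add: g_def sminus_mult2)
    ultimately show ?thesis using 0 by simp
  next
    case (Suc i)
    then have im: "i < m" using that by simp
    have "g j < g (Suc j)" using G[of i] G[of "Suc i"] im Suc by (simp add: g_def)
    moreover have "a (g (Suc j)) = sminus (a (g j))"
      using aG[of i] aG[of "Suc i"] im Suc f1 by (simp add: g_def sminus_mult2)
    ultimately show ?thesis by simp
  qed
  have s2: "a (g 0) \<noteq> 0" using down[OF l0a l0c] f2 smax_mult_eq_0[of "Pos c" "sminus (b (f 0))"] by (simp add: g_def sz)
  have s3: "dle (a k) (a (g 0))" for k
  proof -
    have "dle (a k) (Pos c * ((if k = 0 then 0 else b (k-1)) + sminus (b k)))"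
      using bal sa bal_dle by blast
    moreover have "dle ((if k = 0 then 0 else b (k-1)) + sminus (b k)) (sminus (b (f 0)))"
      using f3 by (simp add: dle_add)
    then have "dle (Pos c * ((if k = 0 then 0 else b (k-1)) + sminus (b k))) (Pos c * sminus (b (f 0)))"
      by (rule dle_mult_Pos)
    ultimately show ?thesis using down[OF l0a l0c] dle_trans by (simp add: g_def)
  qed
  show ?thesis unfolding chain_def using s1 s2 s3 by blast
qed



lemma sminus_is_mult: "sminus (x::'g::linordered_ab_group_add smax) = Neg 0 * x"
  by (cases x; simp)

definition tt :: "'g::linordered_ab_group_add smax poly \<Rightarrow> 'g smax \<Rightarrow> nat \<Rightarrow> 'g smax" where
  "tt P g k = coeff P k * g ^ k"

lemma coeff_lin: "coeff ([:sminus a, 1:] * Q) k = sminus a * coeff Q k + (if k = 0 then 0 else coeff Q (k - 1))"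
  by (cases k) (simp_all)

lemma tt_lin: "tt ([:sminus a, 1:] * Q) g k = sminus a * tt Q g k + (if k = 0 then 0 else g * tt Q g (k - 1))"
  unfolding tt_def coeff_lin
  by (cases k) (simp_all add: algebra_simps)

lemma signed_Pos_power: "\<exists>e. (Pos c :: 'g::linordered_ab_group_add smax) ^ k = Pos e"
  by (induction k) (auto simp: so)

lemma signed_tt: "signed_poly P \<Longrightarrow> signed (tt P (Pos c) k)"
  unfolding tt_def signed_poly_def
  using signed_Pos_power[of c k] by (metis signed_mult signed_cases)

lemma tt_zero: "k > degree P \<Longrightarrow> tt P g k = 0"
  by (simp add: tt_def coeff_eq_0)

lemma Pos_power_neq0: "(Pos c :: 'g::linordered_ab_group_add smax) ^ k \<noteq> 0"
  using signed_Pos_power[of c k] by (auto simp: sz)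

lemma tt_eq0: "tt P (Pos c) k = 0 \<longleftrightarrow> coeff P k = 0"
  unfolding tt_def using Pos_power_neq0 smax_mult_eq_0 by blast

lemma sum_dom:
  fixes f :: "nat \<Rightarrow> 'g::linordered_ab_group_add smax"
  assumes "finite S" "x \<noteq> 0" "\<forall>k\<in>S. f k = x \<or> f k = 0 \<or> (f k \<noteq> 0 \<and> smod (f k) < smod x)"
  shows "sum f S = x \<or> sum f S = 0 \<or> (sum f S \<noteq> 0 \<and> smod (sum f S) < smod x)"
  using assms
proof (induction S rule: finite_induct)
  case empty then show ?case by simp
next
  case (insert a S)
  then have IH: "sum f S = x \<or> sum f S = 0 \<or> (sum f S \<noteq> 0 \<and> smod (sum f S) < smod x)" by auto
  have fa: "f a = x \<or> f a = 0 \<or> (f a \<noteq> 0 \<and> smod (f a) < smod x)" using insert by auto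
  have "sum f (insert a S) = f a + sum f S" using insert by simp
  moreover have "\<And>u v. (u = x \<or> u = 0 \<or> (u \<noteq> 0 \<and> smod u < smod x)) \<Longrightarrow> (v = x \<or> v = 0 \<or> (v \<noteq> 0 \<and> smod v < smod x))
     \<Longrightarrow> (u + v = x \<or> u + v = 0 \<or> (u + v \<noteq> 0 \<and> smod (u + v) < smod x))"
    using \<open>x \<noteq> 0\<close> by (auto simp: smax_add_eq_0 smod_add dom_add dom_add2)
  ultimately show ?case using IH fa by metis
qed

lemma sum_ge:
  fixes f :: "nat \<Rightarrow> 'g::linordered_ab_group_add smax"
  assumes "finite S" "k0 \<in> S" "f k0 \<noteq> 0"
  shows "sum f S \<noteq> 0 \<and> smod (f k0) \<le> smod (sum f S)"
proof -
  have "sum f S = f k0 + sum f (S - {k0})" using assms by (simp add: sum.remove)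
  then show ?thesis using assms(3)
    by (cases "sum f (S - {k0}) = 0") (auto simp: smax_add_eq_0 smod_add)
qed

lemma root_chain:
  fixes P :: "'g::linordered_ab_group_add smax poly"
  assumes sp: "signed_poly P" and nz: "P \<noteq> 0" and rt: "is_sroot P (Pos c)"
  shows "chain (tt P (Pos c)) 1"
proof -
  let ?t = "tt P (Pos c)"
  define S where "S = {k. k \<le> degree P \<and> ?t k \<noteq> 0}"
  have fS: "finite S" unfolding S_def by simp
  have "degree P \<in> S" unfolding S_def using nz by (simp add: tt_eq0)
  then have neS: "S \<noteq> {}" by auto
  obtain k0 where k0: "k0 \<in> S" "\<forall>k\<in>S. smod (?t k) \<le> smod (?t k0)"
  proof -
    let ?M = "Max ((\<lambda>k. smod (?t k)) ` S)"
    have "?M \<in> (\<lambda>k. smod (?t k)) ` S" using fS neS by (intro Max_in) auto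
    then obtain k0 where "k0 \<in> S" "smod (?t k0) = ?M" by auto
    moreover have "\<forall>k\<in>S. smod (?t k) \<le> ?M" using fS by auto
    ultimately show ?thesis using that by auto
  qed
  define x0 where "x0 = ?t k0"
  have x0nz: "x0 \<noteq> 0" using k0 S_def x0_def by simp
  have dom: "dle (?t k) x0" for k
  proof (cases "k \<le> degree P \<and> ?t k \<noteq> 0")
    case True then show ?thesis using k0 x0nz unfolding S_def dle_def x0_def by auto
  next
    case False then show ?thesis using tt_zero[of P k] by (auto simp: dle_def)
  qed
  have x0s: "signed x0" using signed_tt[OF sp] x0_def by simp
  have "\<exists>k1. ?t k1 = sminus x0"
  proof (rule ccontr)
    assume no: "\<not> ?thesis"
    have "\<forall>k\<in>{..degree P}. ?t k = x0 \<or> ?t k = 0 \<or> (?t k \<noteq> 0 \<and> smod (?t k) < smod x0)"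
    proof
      fix k assume "k \<in> {..degree P}"
      have sk: "signed (?t k)" using signed_tt[OF sp] by simp
      show "?t k = x0 \<or> ?t k = 0 \<or> (?t k \<noteq> 0 \<and> smod (?t k) < smod x0)"
        using dom[of k] no sk x0s x0nz unfolding dle_def
        apply (subgoal_tac "?t k \<noteq> sminus x0")
         prefer 2 apply blast
        by (cases "?t k"; cases x0; auto simp: signed_def sz order.order_iff_strict)
    qed
    from sum_dom[OF _ x0nz this]
    have "poly P (Pos c) = x0 \<or> poly P (Pos c) = 0 \<or> (poly P (Pos c) \<noteq> 0 \<and> smod (poly P (Pos c)) < smod x0)"
      by (simp add: poly_altdef tt_def)
    moreover have "poly P (Pos c) \<noteq> x0"
    proof
      assume "poly P (Pos c) = x0"
      then have "balanced x0" using rt by (simp add: is_sroot_def bal_rel_def)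
      then show False using x0s x0nz by (auto simp: balanced_def signed_def sz)
    qed
    moreover have "k0 \<in> {..degree P}" "x0 = ?t k0" using k0 S_def x0_def by auto
    then have "poly P (Pos c) \<noteq> 0 \<and> smod x0 \<le> smod (poly P (Pos c))"
      using sum_ge[of "{..degree P}" k0 ?t] x0nz by (simp add: poly_altdef tt_def)
    ultimately show False by (meson not_le)
  qed
  then obtain k1 where k1: "?t k1 = sminus x0" by blast
  have k01: "k0 \<noteq> k1" using k1 x0_def sminus_neq[OF x0s x0nz] by metis
  define f where "f j = (if j = 0 then min k0 k1 else max k0 k1)" for j :: nat
  have "f 0 < f 1" using k01 by (simp add: f_def)
  moreover have "?t (f 1) = sminus (?t (f 0))" using k1 x0_def k01 by (auto simp: f_def min_def max_def)
  moreover have "?t (f 0) \<noteq> 0" using k1 x0_def x0nz by (auto simp: f_def min_def)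
  moreover have "\<forall>k. dle (?t k) (?t (f 0))"
    using dom k1 x0_def unfolding f_def min_def dle_def by auto
  ultimately show ?thesis unfolding chain_def
    by (intro exI[of _ f]) auto
qed

lemma bal_tt:
  assumes "poly_bal P ([:sminus g, 1:] * Q)"
  shows "\<forall>k. tt P g k \<nabla> g * ((if k = 0 then 0 else tt Q g (k-1)) + sminus (tt Q g k))"
proof
  fix k
  have "coeff P k \<nabla> coeff ([:sminus g, 1:] * Q) k" using assms by (simp add: poly_bal_def)
  then have "tt P g k \<nabla> tt ([:sminus g, 1:] * Q) g k" unfolding tt_def by (rule bal_mult)
  moreover have "tt ([:sminus g, 1:] * Q) g k = g * ((if k = 0 then 0 else tt Q g (k-1)) + sminus (tt Q g k))"
    unfolding tt_lin by (simp add: sminus_is_mult algebra_simps)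
  ultimately show "tt P g k \<nabla> g * ((if k = 0 then 0 else tt Q g (k-1)) + sminus (tt Q g k))" by simp
qed

lemma mult_chain:
  fixes P :: "'g::linordered_ab_group_add smax poly"
  assumes "mult_ge P r k"
  shows "signed_poly P \<Longrightarrow> P \<noteq> 0 \<Longrightarrow> r = Pos c \<Longrightarrow> k = 0 \<or> chain (tt P r) k"
  using assms
proof (induction rule: mult_ge.induct)
  case (mult_ge_0 P r) then show ?case by simp
next
  case (mult_ge_1 P r) then show ?case using root_chain[of P c] by auto
next
  case (mult_ge_Suc P r Q k)
  have "Q \<noteq> 0"
  proof
    assume "Q = 0"
    have "coeff P j = 0" for j
    proof -
      have "coeff P j \<nabla> 0" using mult_ge_Suc.hyps(3) \<open>Q = 0\<close> by (simp add: poly_bal_def)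
      moreover have "signed (coeff P j)" using mult_ge_Suc.prems(1) by (simp add: signed_poly_def)
      moreover have "signed (0::'g smax)" by (simp add: signed_def sz)
      ultimately show ?thesis using bal_signed_eq by blast
    qed
    then have "\<forall>j. coeff P j = 0" by blast
    then show False using mult_ge_Suc.prems(2) by (simp add: poly_eq_iff)
  qed
  then have IH: "k = 0 \<or> chain (tt Q r) k" using mult_ge_Suc by blast
  show ?case
  proof (cases "k = 0")
    case True then show ?thesis using root_chain[of P c] mult_ge_Suc by auto
  next
    case False
    then have ch: "chain (tt Q r) k" using IH by simp
    have r: "r = Pos c" using mult_ge_Suc by simp
    have bt: "\<forall>j. tt P (Pos c) j \<nabla> Pos c * ((if j = 0 then 0 else tt Q (Pos c) (j-1)) + sminus (tt Q (Pos c) j))"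
      by (rule bal_tt[OF mult_ge_Suc.hyps(3)[unfolded r]])
    have sa: "\<forall>j. signed (tt P (Pos c) j)" using signed_tt mult_ge_Suc.prems by blast
    have sb: "\<forall>j. signed (tt Q (Pos c) j)" using signed_tt mult_ge_Suc.hyps by blast
    have fin: "\<forall>j>degree Q. tt Q (Pos c) j = 0" using tt_zero by blast
    have "chain (tt P (Pos c)) (Suc k)"
      using descartes[OF sa sb fin bt] ch r by simp
    then show ?thesis using mult_ge_Suc by simp
  qed
qed



lemma H1: "(x::'g::linordered_ab_group_add) \<le> V \<Longrightarrow> e \<le> E \<Longrightarrow> e + x \<le> V + E"
  by (metis add.commute add_mono)
lemma H3: "(x::'g::linordered_ab_group_add) < V \<Longrightarrow> e \<le> E \<Longrightarrow> e + x < V + E"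
  by (metis add.commute add_less_le_mono)
lemma H2: "(x::'g::linordered_ab_group_add) \<le> V \<Longrightarrow> e \<le> E \<Longrightarrow> e + x = V + E \<Longrightarrow> x = V \<and> e = E"
  by (smt (verit) add.commute add_le_cancel_left add_mono antisym order.trans add_le_cancel_right)

lemma bnd_add: "((u::'g::linordered_ab_group_add smax) = 0 \<or> smod u \<le> W) \<Longrightarrow> (v = 0 \<or> smod v \<le> W) \<Longrightarrow> u + v = 0 \<or> smod (u + v) \<le> W"
  by (cases "u = 0"; cases "v = 0") (auto simp: smod_add)

lemma act_add: "((u::'g::linordered_ab_group_add smax) = 0 \<or> smod u \<le> W) \<Longrightarrow> (v = 0 \<or> smod v \<le> W) \<Longrightarrow> u + v \<noteq> 0 \<Longrightarrow> smod (u + v) = W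
   \<Longrightarrow> (u \<noteq> 0 \<and> smod u = W) \<or> (v \<noteq> 0 \<and> smod v = W)"
  by (cases "u = 0"; cases "v = 0") (auto simp: smod_add max_def split: if_splits)

lemma card_Suc_upd: "card {i. i < Suc n \<and> Q i} = card {i. i < n \<and> Q i} + (if Q n then 1 else 0)"
proof -
  have "{i. i < Suc n \<and> Q i} = (if Q n then insert n {i. i < n \<and> Q i} else {i. i < n \<and> Q i})"
    by (auto simp: less_Suc_eq)
  then show ?thesis by simp
qed

lemma smod_Pos_mult: "x \<noteq> 0 \<Longrightarrow> smod (Pos c * x) = c + smod (x::'g::linordered_ab_group_add smax)"
  by (simp add: smod_mult sz)
lemma smod_Neg_mult: "x \<noteq> 0 \<Longrightarrow> smod (Neg c * x) = c + smod (x::'g::linordered_ab_group_add smax)"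
  by (simp add: smod_mult sz)
lemma Pos_mult_eq0: "Pos c * x = 0 \<longleftrightarrow> (x::'g::linordered_ab_group_add smax) = 0"
  by (cases x) (simp_all add: sz)
lemma Neg_mult_eq0: "Neg c * x = 0 \<longleftrightarrow> (x::'g::linordered_ab_group_add smax) = 0"
  by (cases x) (simp_all add: sz)

definition Pn :: "(nat \<Rightarrow> 'g::linordered_ab_group_add) \<Rightarrow> nat \<Rightarrow> 'g smax poly" where
  "Pn e n = (\<Prod>i<n. [:sminus (Pos (e i)), 1:])"

lemma prod_struct:
  fixes e :: "nat \<Rightarrow> 'g::linordered_ab_group_add" and c :: 'g
  defines "t \<equiv> \<lambda>n. tt (Pn e n) (Pos c)"
    and "V \<equiv> \<lambda>n. (\<Sum>i<n. max (e i) c)"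
    and "L \<equiv> \<lambda>n. card {i. i < n \<and> e i < c}"
    and "C \<equiv> \<lambda>n. card {i. i < n \<and> e i = c}"
  shows "(\<forall>k. t n k = 0 \<or> smod (t n k) \<le> V n) \<and> (t n (L n) \<noteq> 0 \<and> smod (t n (L n)) = V n) \<and>
     (\<forall>k. t n k \<noteq> 0 \<longrightarrow> smod (t n k) = V n \<longrightarrow> L n \<le> k \<and> k \<le> L n + C n)"
proof (induction n)
  case 0
  have t0: "t 0 k = (if k = 0 then Pos 0 else 0)" for k
    by (simp add: t_def tt_def Pn_def so)
  show ?case by (simp add: t0 V_def L_def C_def sz)
next
  case (Suc n)
  note IH = Suc.IH
  define E where "E = max (e n) c"
  have VS: "V (Suc n) = V n + E" by (simp add: V_def E_def)
  have LS: "L (Suc n) = L n + (if e n < c then 1 else 0)" by (simp add: L_def card_Suc_upd)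
  have CS: "C (Suc n) = C n + (if e n = c then 1 else 0)" by (simp add: C_def card_Suc_upd)
  define a where "a k = Neg (e n) * t n k" for k
  define b where "b k = (if k = 0 then 0 else Pos c * t n (k - 1))" for k
  have tS: "t (Suc n) k = a k + b k" for k
  proof -
    have eq: "Pn e (Suc n) = [:sminus (Pos (e n)), 1:] * Pn e n" by (simp add: Pn_def mult.commute)
    have "t (Suc n) k = sminus (Pos (e n)) * t n k + (if k = 0 then 0 else Pos c * t n (k-1))"
      unfolding t_def by (simp only: eq tt_lin)
    then show ?thesis by (simp add: a_def b_def)
  qed
  have ea: "e n \<le> E" "c \<le> E" by (auto simp: E_def)
  have abnd: "a k = 0 \<or> smod (a k) \<le> V n + E" for k
  proof (cases "t n k = 0")
    case True then show ?thesis by (simp add: a_def Neg_mult_eq0)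
  next
    case False
    then have "smod (t n k) \<le> V n" using IH by blast
    then show ?thesis using False H1[OF _ ea(1)] by (simp add: a_def smod_Neg_mult)
  qed
  have bbnd: "b k = 0 \<or> smod (b k) \<le> V n + E" for k
  proof (cases "k = 0 \<or> t n (k - 1) = 0")
    case True then show ?thesis by (auto simp: b_def Pos_mult_eq0)
  next
    case False
    then have "smod (t n (k - 1)) \<le> V n" using IH by blast
    then show ?thesis using False H1[OF _ ea(2)] by (simp add: b_def smod_Pos_mult)
  qed
  have pa: "\<forall>k. t (Suc n) k = 0 \<or> smod (t (Suc n) k) \<le> V (Suc n)"
    using bnd_add[OF abnd bbnd] tS VS by metis
  have pb: "t (Suc n) (L (Suc n)) \<noteq> 0 \<and> smod (t (Suc n) (L (Suc n))) = V (Suc n)"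
  proof (cases "e n < c")
    case True
    then have EE: "E = c" by (simp add: E_def)
    have Ls: "L (Suc n) = Suc (L n)" using LS True by simp
    have bL: "b (Suc (L n)) \<noteq> 0" "smod (b (Suc (L n))) = V n + E"
      using IH EE by (auto simp: b_def Pos_mult_eq0 smod_Pos_mult add.commute)
    have "a (Suc (L n)) = 0 \<or> (b (Suc (L n)) \<noteq> 0 \<and> smod (a (Suc (L n))) < smod (b (Suc (L n))))"
    proof (cases "t n (Suc (L n)) = 0")
      case True then show ?thesis by (simp add: a_def sz)
    next
      case False
      then have "smod (t n (Suc (L n))) \<le> V n" using IH by blast
      then have "e n + smod (t n (Suc (L n))) < V n + E"
        using \<open>e n < c\<close> EE by (metis add.commute add_less_le_mono)
      then show ?thesis using bL False by (simp add: a_def smod_Neg_mult)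
    qed
    then have "t (Suc n) (Suc (L n)) = b (Suc (L n))" using tS dom_add2 by metis
    then show ?thesis using bL Ls VS by simp
  next
    case False
    then have EE: "E = e n" by (simp add: E_def)
    have Ls: "L (Suc n) = L n" using LS False by simp
    have aL: "a (L n) \<noteq> 0" "smod (a (L n)) = V n + E"
      using IH EE by (auto simp: a_def Neg_mult_eq0 smod_Neg_mult add.commute)
    have "b (L n) = 0 \<or> smod (b (L n)) \<le> V n + E" using bbnd by blast
    then have "t (Suc n) (L n) \<noteq> 0 \<and> smod (t (Suc n) (L n)) = V n + E"
      using aL tS by (cases "b (L n) = 0") (auto simp: smax_add_eq_0 smod_add max_def)
    then show ?thesis using Ls VS by simp
  qed
  have pc: "L (Suc n) \<le> k \<and> k \<le> L (Suc n) + C (Suc n)"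
    if nz: "t (Suc n) k \<noteq> 0" and eqV: "smod (t (Suc n) k) = V (Suc n)" for k
  proof -
    have "(a k \<noteq> 0 \<and> smod (a k) = V n + E) \<or> (b k \<noteq> 0 \<and> smod (b k) = V n + E)"
      using act_add[OF abnd bbnd] nz eqV tS VS by metis
    then show ?thesis
    proof
      assume A: "a k \<noteq> 0 \<and> smod (a k) = V n + E"
      then have tk: "t n k \<noteq> 0" "e n + smod (t n k) = V n + E"
        by (auto simp: a_def Neg_mult_eq0 smod_Neg_mult)
      then have "smod (t n k) = V n \<and> e n = E" using IH ea H2 by metis
      then have "L n \<le> k \<and> k \<le> L n + C n" "\<not> e n < c" using IH tk by (auto simp: E_def)
      then show ?thesis using LS CS by auto
    next
      assume B: "b k \<noteq> 0 \<and> smod (b k) = V n + E"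
      then have k0: "k > 0" by (cases "k = 0") (auto simp: b_def)
      have tk: "t n (k - 1) \<noteq> 0" "c + smod (t n (k - 1)) = V n + E"
        using B k0 by (auto simp: b_def Pos_mult_eq0 smod_Pos_mult)
      then have "smod (t n (k - 1)) = V n \<and> c = E" using IH ea H2 by metis
      then have "L n \<le> k - 1 \<and> k - 1 \<le> L n + C n" "e n \<le> c" using IH tk
        by (auto simp: E_def) (metis max.cobounded1)
      then show ?thesis using LS CS k0 by auto
    qed
  qed
  show ?case using pa pb pc by blast
qed

lemma prod_chain_bound:
  fixes e :: "nat \<Rightarrow> 'g::linordered_ab_group_add"
  assumes "chain (tt (Pn e n) (Pos c)) m"
  shows "m \<le> card {i. i < n \<and> e i = c}"
proof -
  let ?t = "tt (Pn e n) (Pos c)"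
  let ?V = "\<Sum>i<n. max (e i) c"
  let ?L = "card {i. i < n \<and> e i < c}"
  let ?C = "card {i. i < n \<and> e i = c}"
  have S: "(\<forall>k. ?t k = 0 \<or> smod (?t k) \<le> ?V) \<and> (?t ?L \<noteq> 0 \<and> smod (?t ?L) = ?V) \<and>
     (\<forall>k. ?t k \<noteq> 0 \<longrightarrow> smod (?t k) = ?V \<longrightarrow> ?L \<le> k \<and> k \<le> ?L + ?C)"
    using prod_struct[where e=e and c=c and n=n] by simp
  obtain f where f1: "\<forall>j<m. f j < f (Suc j) \<and> ?t (f (Suc j)) = sminus (?t (f j))" and f2: "?t (f 0) \<noteq> 0"
    and f3: "\<forall>k. dle (?t k) (?t (f 0))"
    using assms unfolding chain_def by blast
  have act: "?t (f j) \<noteq> 0 \<and> smod (?t (f j)) = smod (?t (f 0))" if "j \<le> m" for j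
    using that
  proof (induction j)
    case 0 then show ?case using f2 by simp
  next
    case (Suc j) then show ?case using f1 by auto
  qed
  have "smod (?t (f 0)) = ?V"
  proof (rule antisym)
    show "smod (?t (f 0)) \<le> ?V" using S f2 by blast
    show "?V \<le> smod (?t (f 0))" using S f3[rule_format, of ?L] by (auto simp: dle_def)
  qed
  then have inr: "?L \<le> f j \<and> f j \<le> ?L + ?C" if "j \<le> m" for j
    using S act[OF that] by auto
  have mono: "f 0 + j \<le> f j" if "j \<le> m" for j
    using that
  proof (induction j)
    case 0 then show ?case by simp
  next
    case (Suc j)
    then have "f 0 + j \<le> f j" "f j < f (Suc j)" using f1 by auto
    then show ?case by simp
  qed
  show ?thesis using mono[of m] inr[of 0] inr[of m] by simp
qed



definition sgncls :: "bool \<Rightarrow> 'g::linordered_ab_group_add smax \<Rightarrow> bool" where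
  "sgncls s x \<longleftrightarrow> x = 0 \<or> (\<exists>c. x = (if s then Pos c else Neg c))"

lemma sgncls_add: "sgncls s x \<Longrightarrow> sgncls s y \<Longrightarrow> sgncls s (x + y)"
  unfolding sgncls_def by (cases s) (auto simp: sz split: if_splits)

lemma sgncls_Neg: "sgncls s x \<Longrightarrow> sgncls (\<not> s) (Neg c * x)"
  unfolding sgncls_def by (cases s) (auto simp: sz)

lemma sgncls_Pos: "sgncls s x \<Longrightarrow> sgncls s (Pos c * x)"
  unfolding sgncls_def by (cases s) (auto simp: sz)

lemma sgncls_signed: "sgncls s x \<Longrightarrow> signed x"
  unfolding sgncls_def signed_def by (cases s) (auto simp: sz)

lemma sgncls_0[simp]: "sgncls s 0" by (simp add: sgncls_def)

lemma prod_sgn: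
  fixes e :: "nat \<Rightarrow> 'g::linordered_ab_group_add"
  assumes "finite S"
  shows "\<forall>k. sgncls (even (card S + k)) (coeff (\<Prod>i\<in>S. [:sminus (Pos (e i)), 1:]) k)"
  using assms
proof (induction S rule: finite_induct)
  case empty
  show ?case by (auto simp: sgncls_def so)
next
  case (insert i S)
  show ?case
  proof
    fix k
    have eq: "(\<Prod>i\<in>insert i S. [:sminus (Pos (e i)), 1:]) = [:sminus (Pos (e i)), 1:] * (\<Prod>i\<in>S. [:sminus (Pos (e i)), 1:])"
      using insert by simp
    have c1: "sgncls (even (card (insert i S) + k)) (Neg (e i) * coeff (\<Prod>i\<in>S. [:sminus (Pos (e i)), 1:]) k)"
      using sgncls_Neg[OF insert.IH[rule_format, of k], of "e i"] insert by simp
    have c2: "sgncls (even (card (insert i S) + k)) (if k = 0 then 0 else coeff (\<Prod>i\<in>S. [:sminus (Pos (e i)), 1:]) (k - 1))"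
    proof (cases k)
      case (Suc j)
      then show ?thesis using insert.IH[rule_format, of j] insert by simp
    qed simp
    show "sgncls (even (card (insert i S) + k)) (coeff (\<Prod>i\<in>insert i S. [:sminus (Pos (e i)), 1:]) k)"
      unfolding eq coeff_lin using sgncls_add[OF c1 c2] by simp
  qed
qed

lemma prod_signed:
  fixes e :: "nat \<Rightarrow> 'g::linordered_ab_group_add"
  assumes "finite S"
  shows "signed_poly (\<Prod>i\<in>S. [:sminus (Pos (e i)), 1:])"
  using prod_sgn[OF assms, of e] sgncls_signed unfolding signed_poly_def by blast

lemma prod_mult_lower:
  fixes e :: "nat \<Rightarrow> 'g::linordered_ab_group_add"
  shows "\<forall>S. finite S \<longrightarrow> card {i\<in>S. e i = c} = k \<longrightarrow> mult_ge (\<Prod>i\<in>S. [:sminus (Pos (e i)), 1:]) (Pos c) k"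
proof (induction k)
  case 0 then show ?case by (simp add: mult_ge_0)
next
  case (Suc k)
  show ?case
  proof (intro allI impI)
    fix S :: "nat set"
    assume fS: "finite S" and cS: "card {i\<in>S. e i = c} = Suc k"
    then obtain i0 where i0: "i0 \<in> S" "e i0 = c"
      by (metis (mono_tags, lifting) card.empty empty_Collect_eq nat.distinct(1))
    let ?Q = "\<Prod>i\<in>S - {i0}. [:sminus (Pos (e i)), 1:]"
    have Peq: "(\<Prod>i\<in>S. [:sminus (Pos (e i)), 1:]) = [:sminus (Pos c), 1:] * ?Q"
      using fS i0 by (simp add: prod.remove)
    have "{i\<in>S - {i0}. e i = c} = {i\<in>S. e i = c} - {i0}" by auto
    then have cQ: "card {i\<in>S - {i0}. e i = c} = k" using cS i0 fS by simp
    have mQ: "mult_ge ?Q (Pos c) k" using Suc.IH fS cQ by simp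
    have sQ: "signed_poly ?Q" using prod_signed fS by blast
    have pc: "poly [:sminus (Pos c), 1:] (Pos c) = Bal c" by (simp add: so)
    have "poly ([:sminus (Pos c), 1:] * ?Q) (Pos c) = Bal c * poly ?Q (Pos c)"
      by (simp only: poly_mult pc)
    then have rt: "is_sroot ([:sminus (Pos c), 1:] * ?Q) (Pos c)"
      unfolding is_sroot_def bal_rel_def by (simp add: balanced_mult balanced_def signed_def)
    have "mult_ge ([:sminus (Pos c), 1:] * ?Q) (Pos c) (Suc k)"
      by (rule mult_ge_Suc[OF rt sQ _ mQ]) (simp add: poly_bal_def bal_refl)
    then show "mult_ge (\<Prod>i\<in>S. [:sminus (Pos (e i)), 1:]) (Pos c) (Suc k)" using Peq by simp
  qed
qed

lemma balanced_prod:
  fixes f :: "nat \<Rightarrow> 'g::linordered_ab_group_add smax"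
  assumes "finite S"
  shows "balanced (\<Prod>i\<in>S. f i) \<longleftrightarrow> (\<exists>i\<in>S. balanced (f i))"
proof -
  have b1: "\<not> balanced (1::'g smax)" by (simp add: so balanced_def sz)
  show ?thesis using assms
    by (induction S rule: finite_induct) (simp_all add: balanced_mult b1)
qed

lemma poly_Pn: "poly (Pn e n) g = (\<Prod>i<n. Neg (e i) + g)"
  by (simp add: Pn_def poly_prod)

lemma Pn_root_iff:
  fixes e :: "nat \<Rightarrow> 'g::linordered_ab_group_add"
  assumes "signed g"
  shows "balanced (poly (Pn e n) g) \<longleftrightarrow> (\<exists>i<n. g = Pos (e i))"
proof -
  have "balanced (Neg (e i) + g) \<longleftrightarrow> g = Pos (e i)" for i
    using assms by (cases g) (auto simp: balanced_def signed_def)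
  then show ?thesis unfolding poly_Pn by (simp add: balanced_prod) (metis lessThan_iff)
qed

lemma prod_nz:
  fixes f :: "nat \<Rightarrow> 'g::linordered_ab_group_add smax"
  assumes "finite S" "\<forall>i\<in>S. f i \<noteq> 0"
  shows "(\<Prod>i\<in>S. f i) \<noteq> 0"
  using assms by (induction S rule: finite_induct) (auto simp: smax_mult_eq_SZero so sz)

lemma Pn_nz: "Pn e n \<noteq> 0"
proof
  assume "Pn e n = 0"
  then have "poly (Pn e n) (Pos 0) = 0" by simp
  moreover have "(\<Prod>i<n. Neg (e i) + Pos 0) \<noteq> 0"
    by (rule prod_nz) (auto simp: smax_add_eq_SZero sz)
  ultimately show False unfolding poly_Pn by simp
qed



lemma sum_two:
  fixes n i j :: nat
  assumes "i \<noteq> j" "i < n" "j < n" "\<forall>l. l \<noteq> i \<and> l \<noteq> j \<longrightarrow> g l = 0"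
  shows "(\<Sum>l<n. g l) = g i + (g j :: 'a::comm_monoid_add)"
proof -
  have "(\<Sum>l<n. g l) = (\<Sum>l\<in>{i, j}. g l)"
    using assms by (intro sum.mono_neutral_right) auto
  then show ?thesis using assms by simp
qed

lemma sum_one:
  fixes n i :: nat
  assumes "i < n" "\<forall>l. l \<noteq> i \<longrightarrow> g l = 0"
  shows "(\<Sum>l<n. g l) = (g i :: 'a::comm_monoid_add)"
proof -
  have "(\<Sum>l<n. g l) = (\<Sum>l\<in>{i}. g l)"
    using assms by (intro sum.mono_neutral_right) auto
  then show ?thesis by simp
qed

lemma TPD_diag:
  fixes A :: "nat \<Rightarrow> nat \<Rightarrow> 'g::linordered_ab_group_add smax"
  assumes "A \<in> TPD n" "i < n"
  shows "A i i = Pos (smod (A i i))"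
proof -
  define x where "x k = (if k = i then (1::'g smax) else 0)" for k
  have sx: "\<forall>k<n. signed (x k)" by (auto simp: x_def signed_def so sz)
  have nx: "\<exists>k<n. x k \<noteq> 0" using assms by (auto simp: x_def so sz intro!: exI[of _ i])
  have "sless 0 (qform A n x)" using assms sx nx unfolding TPD_def by blast
  moreover have "qform A n x = A i i"
  proof -
    have "(\<Sum>l<n. x k * A k l * x l) = x k * A k i * x i" for k
      by (rule sum_one) (auto simp: x_def assms)
    then have "qform A n x = (\<Sum>k<n. x k * A k i * x i)" by (simp add: qform_def)
    also have "\<dots> = x i * A i i * x i" by (rule sum_one) (auto simp: x_def assms)
    finally show ?thesis by (simp add: x_def)
  qed
  ultimately obtain c where "A i i + sminus 0 = Pos c" unfolding sless_def by auto
  then show ?thesis by simp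
qed

lemma TPD_off:
  fixes A :: "nat \<Rightarrow> nat \<Rightarrow> 'g::linordered_ab_group_add smax"
  assumes T: "A \<in> TPD n" and ij: "i < n" "j < n" "i \<noteq> j" and nz: "A i j \<noteq> 0"
  shows "smod (A i j) + smod (A i j) < smod (A i i) + smod (A j j)"
proof (rule ccontr)
  assume "\<not> ?thesis"
  then have h: "smod (A i i) + smod (A j j) \<le> smod (A i j) + smod (A i j)" by simp
  define ei where "ei = smod (A i i)"
  define ej where "ej = smod (A j j)"
  define a where "a = smod (A i j)"
  have Ai: "A i i = Pos ei" using TPD_diag[OF T ij(1)] ei_def by simp
  have Aj: "A j j = Pos ej" using TPD_diag[OF T ij(2)] ej_def by simp
  have sym: "A j i = A i j" using T ij unfolding TPD_def by auto
  have sg: "signed (A i j)" using T ij unfolding TPD_def by auto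
  define t where "t = (if A i j = Pos a then Neg (ei - a) else Pos (ei - a))"
  have tA: "t * A i j = Neg ei"
    using sg nz unfolding t_def a_def by (cases "A i j") (auto simp: signed_def sz)
  have w: "(ei - a) + ej + (ei - a) \<le> ei"
  proof -
    have "(ei - a) + ej + (ei - a) = ei + ((ei + ej) - (a + a))" by (simp add: algebra_simps)
    moreover have "(ei + ej) - (a + a) \<le> 0" using h by (simp add: ei_def ej_def a_def)
    ultimately show ?thesis by (metis add_le_same_cancel1)
  qed
  have tt2: "t * Pos ej * t = Pos ((ei - a) + ej + (ei - a))"
    unfolding t_def by auto
  define x where "x k = (if k = i then (1::'g smax) else if k = j then t else 0)" for k
  have sx: "\<forall>k<n. signed (x k)" by (auto simp: x_def signed_def so sz t_def)
  have nx: "\<exists>k<n. x k \<noteq> 0" using ij by (auto simp: x_def so sz intro!: exI[of _ i])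
  have "sless 0 (qform A n x)" using T sx nx unfolding TPD_def by blast
  moreover have "qform A n x = (A i i + t * A i j) + (t * A i j + t * A j j * t)"
  proof -
    have inner: "(\<Sum>l<n. x k * A k l * x l) = x k * A k i * x i + x k * A k j * x j" for k
      by (rule sum_two) (auto simp: x_def ij)
    have "qform A n x = (\<Sum>k<n. x k * A k i * x i + x k * A k j * x j)" by (simp add: qform_def inner)
    also have "\<dots> = (x i * A i i * x i + x i * A i j * x j) + (x j * A j i * x i + x j * A j j * x j)"
      by (rule sum_two) (auto simp: x_def ij)
    finally show ?thesis using ij sym by (simp add: x_def mult.commute)
  qed
  moreover have "(A i i + t * A i j) + (t * A i j + t * A j j * t) = Bal ei"
    using w unfolding Ai Aj tA tt2 by (auto simp: not_less)
  ultimately show False unfolding sless_def by simp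
qed



lemma const_prod:
  assumes "finite S"
  shows "(\<Prod>i\<in>S. [:f i:]) = [:\<Prod>i\<in>S. f i :: 'a::comm_semiring_1:]"
  using assms by (induction S rule: finite_induct) (simp_all add: one_pCons mult.commute)

lemma smod_prod:
  fixes f :: "nat \<Rightarrow> 'g::linordered_ab_group_add smax"
  assumes "finite S" "\<forall>i\<in>S. f i \<noteq> 0"
  shows "(\<Prod>i\<in>S. f i) \<noteq> 0 \<and> smod (\<Prod>i\<in>S. f i) = (\<Sum>i\<in>S. smod (f i))"
  using assms
proof (induction S rule: finite_induct)
  case empty then show ?case by (simp add: so sz)
next
  case (insert x S)
  then show ?case by (simp add: smax_mult_eq_0 smod_mult)
qed

lemma pminus_1: "pminus (1::'g::linordered_ab_group_add smax poly) = [:Neg 0:]"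
  by (simp add: pminus_def one_pCons map_poly_pCons so)

lemma absorb:
  assumes "finite F" "\<forall>p\<in>F. R + t p = (R::'a::comm_monoid_add)"
  shows "R + sum t F = R"
  using assms
proof (induction F rule: finite_induct)
  case empty then show ?case by simp
next
  case (insert x F)
  then have "R + sum t (insert x F) = (R + t x) + sum t F" by (simp add: add.assoc[symmetric])
  then show ?case using insert by simp
qed

lemma cycle_ineq:
  fixes A :: "nat \<Rightarrow> nat \<Rightarrow> 'g::linordered_ab_group_add smax"
  assumes T: "A \<in> TPD n" and p: "p permutes {..<n}"
    and D: "D = {i. i < n \<and> p i \<noteq> i}" and Dne: "D \<noteq> {}"
    and nz: "\<forall>i\<in>D. A i (p i) \<noteq> 0"
  shows "(\<Sum>i\<in>D. smod (A i (p i))) < (\<Sum>i\<in>D. smod (A i i))"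
proof -
  let ?e = "\<lambda>i. smod (A i i)"
  let ?a = "\<lambda>i. smod (A i (p i))"
  have fD: "finite D" using D by simp
  have pn: "p i < n" if "i < n" for i using permutes_in_image[OF p] that by simp
  have "(\<Sum>i\<in>D. ?a i + ?a i) < (\<Sum>i\<in>D. ?e i + ?e (p i))"
  proof (rule sum_strict_mono[OF fD Dne])
    fix i assume "i \<in> D"
    then show "?a i + ?a i < ?e i + ?e (p i)"
      using TPD_off[OF T, of i "p i"] pn nz D by auto
  qed
  moreover have "(\<Sum>i\<in>D. ?e (p i)) = (\<Sum>i\<in>D. ?e i)"
  proof -
    have inj: "inj_on p D" using permutes_inj[OF p] by (simp add: inj_on_def)
    have "p ` D \<subseteq> D"
    proof
      fix y assume "y \<in> p ` D"
      then obtain i where i: "i \<in> D" "y = p i" by blast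
      have "p (p i) \<noteq> p i" using i D permutes_inj[OF p] by (auto simp: inj_def)
      then show "y \<in> D" using i D pn by auto
    qed
    then have "p ` D = D" using endo_inj_surj[OF fD _ inj] by simp
    then have "(\<Sum>i\<in>D. ?e i) = (\<Sum>i\<in>p ` D. ?e i)" by simp
    also have "\<dots> = (\<Sum>i\<in>D. ?e (p i))" using sum.reindex[OF inj] by simp
    finally show ?thesis by simp
  qed
  ultimately have "(\<Sum>i\<in>D. ?a i) + (\<Sum>i\<in>D. ?a i) < (\<Sum>i\<in>D. ?e i) + (\<Sum>i\<in>D. ?e i)"
    by (simp add: sum.distrib)
  then show ?thesis by (meson add_mono not_le)
qed



lemma perm_term_dom:
  fixes A :: "nat \<Rightarrow> nat \<Rightarrow> 'g::linordered_ab_group_add smax"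
  assumes T: "A \<in> TPD n" and p: "p permutes {..<n}" and pid: "p \<noteq> id"
  defines "e \<equiv> \<lambda>i. smod (A i i)"
    and "M \<equiv> \<lambda>i j. (if i = j then [:0, 1:] else 0) + [:sminus (A i j):]"
  shows "Pn e n + (if evenperm p then 1 else pminus 1) * (\<Prod>i<n. M i (p i)) = Pn e n"
proof -
  define D where "D = {i. i < n \<and> p i \<noteq> i}"
  define F where "F = {i. i < n \<and> p i = i}"
  have fD: "finite D" and fF: "finite F" by (auto simp: D_def F_def)
  have DF: "{..<n} = D \<union> F" "D \<inter> F = {}" by (auto simp: D_def F_def)
  define S where "S = (\<Prod>i\<in>F. [:sminus (Pos (e i)), 1:])"
  define Rd where "Rd = (\<Prod>i\<in>D. [:sminus (Pos (e i)), 1:])"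
  have R: "Pn e n = Rd * S"
    unfolding Pn_def Rd_def S_def DF(1) by (rule prod.union_disjoint[OF fD fF DF(2)])
  have Aii: "A i i = Pos (e i)" if "i < n" for i using TPD_diag[OF T that] e_def by simp
  have MD: "(\<Prod>i\<in>D. M i (p i)) = [:\<Prod>i\<in>D. sminus (A i (p i)):]"
  proof -
    have "(\<Prod>i\<in>D. M i (p i)) = (\<Prod>i\<in>D. [:sminus (A i (p i)):])"
      by (rule prod.cong) (auto simp: M_def D_def)
    then show ?thesis using const_prod[OF fD] by simp
  qed
  have MF: "(\<Prod>i\<in>F. M i (p i)) = S"
    unfolding S_def by (rule prod.cong) (auto simp: M_def F_def Aii)
  define s where "s = (if evenperm p then Pos 0 else (Neg 0 :: 'g smax))"
  have sig: "(if evenperm p then 1 else pminus 1) = [:s:]"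
  proof -
    have "(1::'g smax poly) = [:Pos 0:]" by (simp add: one_pCons so)
    then show ?thesis by (simp only: s_def pminus_1) simp
  qed
  define c0 where "c0 = s * (\<Prod>i\<in>D. sminus (A i (p i)))"
  have tm: "(if evenperm p then 1 else pminus 1) * (\<Prod>i<n. M i (p i)) = smult c0 S"
  proof -
    have "(\<Prod>i<n. M i (p i)) = (\<Prod>i\<in>D. M i (p i)) * (\<Prod>i\<in>F. M i (p i))"
      unfolding DF(1) by (rule prod.union_disjoint[OF fD fF DF(2)])
    then show ?thesis unfolding sig MD MF c0_def by (simp add: mult.commute)
  qed
  have Dne: "D \<noteq> {}"
  proof
    assume "D = {}"
    have "p x = x" for x
    proof (cases "x < n")
      case True then show ?thesis using \<open>D = {}\<close> D_def by auto
    next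
      case False then show ?thesis using permutes_not_in[OF p] by auto
    qed
    then show False using pid by auto
  qed
  have r0: "coeff Rd 0 = (\<Prod>i\<in>D. Neg (e i))"
    unfolding Rd_def poly_0_coeff_0[symmetric] poly_prod by simp
  have r0s: "coeff Rd 0 \<noteq> 0 \<and> smod (coeff Rd 0) = (\<Sum>i\<in>D. e i)"
    unfolding r0 using smod_prod[OF fD, of "\<lambda>i. Neg (e i)"] by (simp add: sz)
  have "coeff (Pn e n + smult c0 S) k = coeff (Pn e n) k" for k
  proof (cases "c0 * coeff S k = 0")
    case True then show ?thesis by simp
  next
    case False
    then have c0nz: "c0 \<noteq> 0" and sknz: "coeff S k \<noteq> 0" by (auto simp: smax_mult_eq_0)
    have snz: "s \<noteq> 0" "smod s = 0" by (auto simp: s_def sz)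
    have anz: "\<forall>i\<in>D. A i (p i) \<noteq> 0"
    proof
      fix i assume "i \<in> D"
      show "A i (p i) \<noteq> 0"
      proof
        assume "A i (p i) = 0"
        then have "(\<Prod>i\<in>D. sminus (A i (p i))) = 0" using \<open>i \<in> D\<close> fD by (intro prod_zero) auto
        then show False using c0nz c0_def by simp
      qed
    qed
    have "(\<Prod>i\<in>D. sminus (A i (p i))) \<noteq> 0 \<and> smod (\<Prod>i\<in>D. sminus (A i (p i))) = (\<Sum>i\<in>D. smod (A i (p i)))"
      using smod_prod[OF fD, of "\<lambda>i. sminus (A i (p i))"] anz by simp
    then have smc0: "smod c0 = (\<Sum>i\<in>D. smod (A i (p i)))"
      using snz by (simp add: c0_def smod_mult)
    have cyc: "(\<Sum>i\<in>D. smod (A i (p i))) < (\<Sum>i\<in>D. e i)"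
      using cycle_ineq[OF T p D_def Dne anz] by (simp add: e_def)
    have ck: "coeff (Pn e n) k = (\<Sum>j\<le>k. coeff Rd j * coeff S (k - j))"
      unfolding R coeff_mult ..
    have "coeff Rd 0 * coeff S (k - 0) \<noteq> 0" using r0s sknz by (simp add: smax_mult_eq_0)
    from sum_ge[of "{..k}" 0 "\<lambda>j. coeff Rd j * coeff S (k - j)", OF _ _ this]
    have big: "coeff (Pn e n) k \<noteq> 0 \<and> smod (coeff Rd 0 * coeff S k) \<le> smod (coeff (Pn e n) k)"
      unfolding ck by simp
    have "smod (c0 * coeff S k) = smod c0 + smod (coeff S k)" using c0nz sknz by (simp add: smod_mult)
    also have "\<dots> < (\<Sum>i\<in>D. e i) + smod (coeff S k)" using smc0 cyc by (simp add: add_strict_right_mono)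
    also have "\<dots> = smod (coeff Rd 0 * coeff S k)" using r0s sknz by (simp add: smod_mult)
    finally have "smod (c0 * coeff S k) < smod (coeff (Pn e n) k)" using big by (meson order_less_le_trans)
    then show ?thesis using big by (simp add: dom_add)
  qed
  then have "Pn e n + smult c0 S = Pn e n" by (simp add: poly_eq_iff)
  then show ?thesis using tm by simp
qed

lemma charpoly_eq:
  fixes A :: "nat \<Rightarrow> nat \<Rightarrow> 'g::linordered_ab_group_add smax"
  assumes T: "A \<in> TPD n"
  shows "charpoly A n = Pn (\<lambda>i. smod (A i i)) n"
proof -
  let ?M = "\<lambda>i j. (if i = j then [:0, 1:] else 0) + [:sminus (A i j):]"
  let ?t = "\<lambda>p. (if evenperm p then 1 else pminus 1) * (\<Prod>i<n. ?M i (p i))"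
  let ?P = "{p. p permutes {..<n}}"
  let ?R = "Pn (\<lambda>i. smod (A i i)) n"
  have fP: "finite ?P" by (simp add: finite_permutations)
  have idP: "id \<in> ?P" by (simp add: permutes_id)
  have tid: "?t id = ?R"
  proof -
    have "(\<Prod>i<n. ?M i (id i)) = ?R"
      unfolding Pn_def by (rule prod.cong) (auto simp: TPD_diag[OF T, symmetric])
    then show ?thesis by (simp add: evenperm_id)
  qed
  have "charpoly A n = sum ?t ?P"
    unfolding charpoly_def det_gen_def by (rule refl)
  also have "\<dots> = ?t id + sum ?t (?P - {id})" by (rule sum.remove[OF fP idP])
  also have "\<dots> = ?R + sum ?t (?P - {id})" using tid by simp
  also have "\<dots> = ?R"
    by (rule absorb) (use fP perm_term_dom[OF T] in auto)
  finally show ?thesis .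
qed

lemma charpoly_eval:
  fixes A :: "nat \<Rightarrow> nat \<Rightarrow> 'g::linordered_ab_group_add smax"
  shows "poly (charpoly A n) g = sdet (\<lambda>i j. (if i = j then g else 0) + sminus (A i j)) n"
proof -
  have pif: "poly (if b then [:0, 1:] else 0) g = (if b then g else 0)" for b by simp
  show ?thesis
    unfolding charpoly_def sdet_def det_gen_def poly_sum
    by (rule sum.cong) (auto simp: poly_prod pminus_1 so pif)
qed



theorem theorem4p12:
  fixes A :: "nat \<Rightarrow> nat \<Rightarrow> 'g::linordered_ab_group_add smax" and n :: nat
  assumes "divisible_group TYPE('g)"
    and "A \<in> TPD n"
  shows "{\<gamma>. s_eigenvalue A n \<gamma>} = {A i i | i. i < n} \<and>
    (\<forall>\<gamma>. signed \<gamma> \<longrightarrow> root_mult (charpoly A n) \<gamma> = card {i. i < n \<and> A i i = \<gamma>})"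
proof -
  note T = assms(2)
  define e where "e i = smod (A i i)" for i
  have Aii: "A i i = Pos (e i)" if "i < n" for i using TPD_diag[OF T that] e_def by simp
  have ee: "e = (\<lambda>i. smod (A i i))" using e_def by (simp add: fun_eq_iff)
  have CP: "charpoly A n = Pn e n" using charpoly_eq[OF T] ee by simp
  have EV: "s_eigenvalue A n g \<longleftrightarrow> signed g \<and> balanced (poly (Pn e n) g)" for g
    unfolding s_eigenvalue_def bal_rel_def charpoly_eval[symmetric] CP by simp
  have part1: "{\<gamma>. s_eigenvalue A n \<gamma>} = {A i i | i. i < n}"
  proof (intro set_eqI iffI)
    fix g assume "g \<in> {\<gamma>. s_eigenvalue A n \<gamma>}"
    then have "signed g" "\<exists>i<n. g = Pos (e i)" using EV Pn_root_iff by blast+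
    then obtain i where "i < n" "g = Pos (e i)" by blast
    then show "g \<in> {A i i | i. i < n}" using Aii by (metis (mono_tags, lifting) mem_Collect_eq)
  next
    fix g assume "g \<in> {A i i | i. i < n}"
    then obtain i where i: "i < n" "g = Pos (e i)" using Aii by auto
    then have "signed g" by (simp add: signed_def)
    then show "g \<in> {\<gamma>. s_eigenvalue A n \<gamma>}" using EV Pn_root_iff i by blast
  qed
  have part2: "root_mult (charpoly A n) g = card {i. i < n \<and> A i i = g}" if sg: "signed g" for g
  proof (cases "\<exists>c. g = Pos c")
    case True
    then obtain c where gc: "g = Pos c" by blast
    have cardeq: "{i. i < n \<and> A i i = g} = {i \<in> {..<n}. e i = c}" using Aii gc by auto
    let ?C = "card {i \<in> {..<n}. e i = c}"
    have low: "mult_ge (Pn e n) g ?C"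
      using prod_mult_lower[of e c ?C] gc by (simp add: Pn_def)
    have up: "k \<le> ?C" if "mult_ge (Pn e n) g k" for k
    proof -
      have "k = 0 \<or> chain (tt (Pn e n) (Pos c)) k"
        using mult_chain[OF that] gc prod_signed[of "{..<n}" e] Pn_nz[of e n] by (simp add: Pn_def)
      moreover have "{i. i < n \<and> e i = c} = {i \<in> {..<n}. e i = c}" by auto
      ultimately show ?thesis using prod_chain_bound[of e n c k] by auto
    qed
    have "root_mult (Pn e n) g = ?C"
      unfolding root_mult_def by (rule Greatest_equality[where P="\<lambda>k. mult_ge (Pn e n) g k", OF low up])
    then show ?thesis using CP cardeq by simp
  next
    case False
    have cardeq: "{i. i < n \<and> A i i = g} = {}" using Aii False by auto
    have up: "k = 0" if "mult_ge (Pn e n) g k" for k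
      using that
    proof (cases rule: mult_ge.cases)
      case mult_ge_1
      then have "balanced (poly (Pn e n) g)" by (simp add: is_sroot_def bal_rel_def)
      then show ?thesis using Pn_root_iff[OF sg] False by blast
    next
      case (mult_ge_Suc Q k')
      then have "balanced (poly (Pn e n) g)" by (simp add: is_sroot_def bal_rel_def)
      then show ?thesis using Pn_root_iff[OF sg] False by blast
    qed simp
    have "root_mult (Pn e n) g = 0"
      unfolding root_mult_def by (rule Greatest_equality) (auto intro: mult_ge_0 up)
    then show ?thesis using CP cardeq by simp
  qed
  show ?thesis using part1 part2 by blast
qed

end
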